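(* Let $F(\mathbf{w})=\mathbb{E}_{\mathbf{x}\sim\mathcal{X}}[f(\mathbf{w},\mathbf{x})]$ satisfy (PL) with constant $\alpha>0$, (Smooth) with constant $\beta>0$, and (Bounded variance) with constant $V\ge0$; let $F^*=\min_{\mathbf{w}}F(\mathbf{w})$. Let $\eta\in(0,2\beta^{-1})$, $\gamma=\eta\alpha(2-\eta\beta)$, $\Delta=\frac{1}{2\gamma}\eta^2\beta V$, and let $S$ be a positive integer with $S\le\gamma^{-1}$. Run the AdaScale algorithm with scale $S$, constant schedule $\mathrm{lr}(t)=\eta$, and some $T_{\mathrm{SI}}>0$, and let $T$ be its total number of iterations and $\bar r=\frac1T\sum_{t=0}^{T-1}r_t$ its average gain ratio. Then \[ \mathbb{E}[F(\mathbf{w}_T)-F^*]\le(1-\gamma)^{\bar rT}[F(\mathbf{w}_0)-F^*]+\Delta. \]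
   Context: Setting: $\mathcal{X}$ is a distribution over batches; $f(\cdot,\mathbf{x})$ and $F$ are differentiable and $\mathbb{E}_{\mathbf{x}\sim\mathcal{X}}[\nabla_{\mathbf{w}}f(\mathbf{w},\mathbf{x})]=\nabla F(\mathbf{w})$. $\sigma_{\mathbf{g}}^2(\mathbf{w})=\mathrm{tr}\big(\mathrm{cov}_{\mathbf{x}\sim\mathcal{X}}(\nabla_{\mathbf{w}}f(\mathbf{w},\mathbf{x}),\nabla_{\mathbf{w}}f(\mathbf{w},\mathbf{x}))\big)$ and $\mu_{\mathbf{g}}^2(\mathbf{w})=\|\nabla F(\mathbf{w})\|^2$. (PL): $F(\mathbf{w})-F^*\le\frac1{2\alpha}\|\nabla F(\mathbf{w})\|^2$ for all $\mathbf{w}$. (Smooth): $\|\nabla F(\mathbf{w})-\nabla F(\mathbf{w}')\|\le\beta\|\mathbf{w}-\mathbf{w}'\|$. (Bounded variance): $\sigma_{\mathbf{g}}^2(\mathbf{w})\le V$ for all $\mathbf{w}$. AdaScale algorithm (inputs: scale $S$, schedule $\mathrm{lr}$, $T_{\mathrm{SI}}>0$, $\mathbf{w}_0$): set $\tau_0=0$, $t=0$. While $\tau_t<T_{\mathrm{SI}}$: draw $S$ batches $\mathbf{x}^{(1)},\dots,\mathbf{x}^{(S)}\sim\mathcal{X}$ independently of each other and of the past, set $\bar{\mathbf{g}}_t=\frac1S\sum_{i=1}^S\nabla_{\mathbf{w}}f(\mathbf{w}_t,\mathbf{x}^{(i)})$; set the deterministic gain ratio \[ r_t=\frac{\mathbb{E}_{\mathbf{w}_t}[\sigma_{\mathbf{g}}^2(\mathbf{w}_t)+\mu_{\mathbf{g}}^2(\mathbf{w}_t)]}{\mathbb{E}_{\mathbf{w}_t}[\tfrac1S\sigma_{\mathbf{g}}^2(\mathbf{w}_t)+\mu_{\mathbf{g}}^2(\mathbf{w}_t)]}\in[1,S]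 \] (expectation over the distribution of $\mathbf{w}_t$ induced by previous random batches; $r_t:=1$ if the denominator is $0$); set $\eta_t=r_t\cdot\mathrm{lr}(\lfloor\tau_t\rfloor)$, $\mathbf{w}_{t+1}=\mathbf{w}_t-\eta_t\bar{\mathbf{g}}_t$, $\tau_{t+1}=\tau_t+r_t$, $t\leftarrow t+1$. Output the final iterate. Since $r_t\ge1$, the loop terminates after finitely many iterations. *)

theory Defs
  imports "HOL-Probability.Probability"
begin

text \<open>Trace of the covariance matrix of the stochastic gradient at w:
  sum over an orthonormal basis of the variances of the coordinates.\<close>
definition grad_var :: "'x measure \<Rightarrow> ('a::euclidean_space \<Rightarrow> 'x \<Rightarrow> 'a) \<Rightarrow> 'a \<Rightarrow> real" where
  "grad_var M g w = (\<Sum>b\<in>Basis. \<integral>x. ((g w x - (\<integral>y. g w y \<partial>M)) \<bullet> b)^2 \<partial>M)"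

definition grad_sqnorm :: "('a::euclidean_space \<Rightarrow> 'a) \<Rightarrow> 'a \<Rightarrow> real" where
  "grad_sqnorm gradF w = (norm (gradF w))^2"

text \<open>Deterministic gain ratio r_t computed from the law of the random iterate W.\<close>
definition gain_ratio ::
  "'o measure \<Rightarrow> nat \<Rightarrow> ('a \<Rightarrow> real) \<Rightarrow> ('a \<Rightarrow> real) \<Rightarrow> ('o \<Rightarrow> 'a) \<Rightarrow> real" where
  "gain_ratio P S sig mu W =
     (let num = (\<integral>\<omega>. sig (W \<omega>) + mu (W \<omega>) \<partial>P);
          den = (\<integral>\<omega>. sig (W \<omega>) / real S + mu (W \<omega>) \<partial>P)
      in if den = 0 then 1 else num / den)"

text \<open>State (w_t, tau_t) of AdaScale after t iterations (ignoring the stopping test).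
  xs t i is the i-th batch drawn in iteration t.\<close>
fun adascale_state ::
  "'o measure \<Rightarrow> 'x measure \<Rightarrow> ('a::euclidean_space \<Rightarrow> 'x \<Rightarrow> 'a) \<Rightarrow> ('a \<Rightarrow> 'a) \<Rightarrow>
   nat \<Rightarrow> (nat \<Rightarrow> real) \<Rightarrow> 'a \<Rightarrow> (nat \<Rightarrow> nat \<Rightarrow> 'o \<Rightarrow> 'x) \<Rightarrow> nat \<Rightarrow> ('o \<Rightarrow> 'a) \<times> real" where
  "adascale_state P M g gradF S lr w0 xs 0 = ((\<lambda>_. w0), 0)"
| "adascale_state P M g gradF S lr w0 xs (Suc t) =
     (let (W, \<tau>) = adascale_state P M g gradF S lr w0 xs t;
          r = gain_ratio P S (grad_var M g) (grad_sqnorm gradF) W;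
          \<eta> = r * lr (nat \<lfloor>\<tau>\<rfloor>)
      in ((\<lambda>\<omega>. W \<omega> - \<eta> *\<^sub>R ((1 / real S) *\<^sub>R (\<Sum>i<S. g (W \<omega>) (xs t i \<omega>)))), \<tau> + r))"

definition adascale_r where
  "adascale_r P M g gradF S lr w0 xs t =
     gain_ratio P S (grad_var M g) (grad_sqnorm gradF) (fst (adascale_state P M g gradF S lr w0 xs t))"

definition adascale_T where
  "adascale_T P M g gradF S lr w0 xs TSI =
     (LEAST t. snd (adascale_state P M g gradF S lr w0 xs t) \<ge> TSI)"

end

theory Submission
  imports Defs
begin
locale ada =
  fixes F :: "'a::euclidean_space \<Rightarrow> real" and gradF :: "'a \<Rightarrow> 'a" and \<beta> Fstar :: real
  assumes F_grad: "\<And>w. (F has_derivative (\<lambda>h. gradF w \<bullet> h)) (at w)"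
    and smooth: "\<And>w w'. norm (gradF w - gradF w') \<le> \<beta> * norm (w - w')"
    and Fstar_min: "\<And>w. Fstar \<le> F w" and \<beta>_pos: "\<beta> > 0"
begin

lemma F_line_deriv:
  "((\<lambda>t. F (x + t *\<^sub>R d)) has_real_derivative (gradF (x + t *\<^sub>R d) \<bullet> d)) (at t)"
proof -
  have l: "((\<lambda>t. x + t *\<^sub>R d) has_derivative (\<lambda>h. h *\<^sub>R d)) (at t)"
    by (auto intro!: derivative_eq_intros)
  have "((\<lambda>t. F (x + t *\<^sub>R d)) has_derivative (\<lambda>h. gradF (x + t *\<^sub>R d) \<bullet> (h *\<^sub>R d))) (at t)"
    using has_derivative_compose[OF l F_grad] by (simp add: o_def)
  moreover have "(\<lambda>h. gradF (x + t *\<^sub>R d) \<bullet> (h *\<^sub>R d)) = (*) (gradF (x + t *\<^sub>R d) \<bullet> d)"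
    by (auto simp: fun_eq_iff)
  ultimately show ?thesis by (simp add: has_field_derivative_def)
qed

lemma descent: "F (x + d) \<le> F x + gradF x \<bullet> d + \<beta> / 2 * (norm d)^2"
proof -
  define h where "h t = F (x + t *\<^sub>R d) - t * (gradF x \<bullet> d) - \<beta> / 2 * t^2 * (norm d)^2" for t
  have "h 0 \<ge> h 1"
  proof (rule DERIV_nonpos_imp_nonincreasing[of 0 1])
    fix t :: real assume t: "0 \<le> t" "t \<le> 1"
    have D: "DERIV h t :> gradF (x + t *\<^sub>R d) \<bullet> d - gradF x \<bullet> d - \<beta> / 2 * (2 * t) * (norm d)^2"
      unfolding h_def by (auto intro!: derivative_eq_intros F_line_deriv)
    have "gradF (x + t *\<^sub>R d) \<bullet> d - gradF x \<bullet> d = (gradF (x + t *\<^sub>R d) - gradF x) \<bullet> d"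
      by (simp add: inner_diff_left)
    also have "\<dots> \<le> norm (gradF (x + t *\<^sub>R d) - gradF x) * norm d"
      by (rule norm_cauchy_schwarz)
    also have "\<dots> \<le> (\<beta> * norm (t *\<^sub>R d)) * norm d"
      using smooth[of "x + t *\<^sub>R d" x] by (intro mult_right_mono) auto
    also have "\<dots> = \<beta> / 2 * (2 * t) * (norm d)^2"
      using t by (simp add: power2_eq_square)
    finally show "\<exists>y. DERIV h t :> y \<and> y \<le> 0" using D by auto
  qed simp
  thus ?thesis unfolding h_def by simp
qed

lemma grad_bound: "(norm (gradF w))^2 \<le> 2 * \<beta> * (F w - Fstar)"
proof -
  have "Fstar \<le> F (w + (- (1/\<beta>) *\<^sub>R gradF w))" by (rule Fstar_min)
  also have "\<dots> \<le> F w + gradF w \<bullet> (- (1/\<beta>) *\<^sub>R gradF w) + \<beta> / 2 * (norm (- (1/\<beta>) *\<^sub>R gradF w))^2"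
    by (rule descent)
  also have "\<dots> = F w - (norm (gradF w))^2 / (2 * \<beta>)"
    using \<beta>_pos by (simp add: power2_eq_square inner_commute field_simps power_mult_distrib dot_square_norm)
  finally show ?thesis using \<beta>_pos by (simp add: field_simps)
qed

end

locale adaM = ada F gradF \<beta> Fstar
  for F :: "'a::euclidean_space \<Rightarrow> real" and gradF \<beta> Fstar +
  fixes M :: "'x measure" and g :: "'a \<Rightarrow> 'x \<Rightarrow> 'a"
  assumes M: "prob_space M"
    and g_meas: "(\<lambda>(w, x). g w x) \<in> borel_measurable (borel \<Otimes>\<^sub>M M)"
    and g_int: "\<And>w. integrable M (g w)"
    and g_sq_int: "\<And>w. integrable M (\<lambda>x. (norm (g w x))^2)"
    and unbiased: "\<And>w. (\<integral>x. g w x \<partial>M) = gradF w"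
begin

interpretation M: prob_space M by (rule M)

lemma g_meas1[measurable]: "g w \<in> borel_measurable M"
proof -
  have "(\<lambda>x. (w, x)) \<in> measurable M (borel \<Otimes>\<^sub>M M)" by simp
  from measurable_compose[OF this g_meas] show ?thesis by simp
qed


lemma gradF_cont: "continuous_on UNIV gradF"
  unfolding continuous_on_iff
proof safe
  fix x :: 'a and e :: real assume "0 < e"
  show "\<exists>d>0. \<forall>x'\<in>UNIV. dist x' x < d \<longrightarrow> dist (gradF x') (gradF x) < e"
  proof (intro exI[of _ "e / \<beta>"] conjI ballI impI)
    show "0 < e / \<beta>" using \<open>0 < e\<close> \<beta>_pos by simp
    fix x' assume "dist x' x < e / \<beta>"
    hence "\<beta> * dist x' x < e" using \<beta>_pos by (simp add: field_simps)
    moreover have "dist (gradF x') (gradF x) \<le> \<beta> * dist x' x"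
      using smooth[of x' x] by (simp add: dist_norm)
    ultimately show "dist (gradF x') (gradF x) < e" by simp
  qed
qed

lemma gradF_meas[measurable]: "gradF \<in> borel_measurable borel"
  by (rule borel_measurable_continuous_onI[OF gradF_cont])

lemma F_cont: "continuous_on UNIV F"
  using F_grad has_derivative_continuous continuous_at_imp_continuous_on by blast

lemma F_meas[measurable]: "F \<in> borel_measurable borel"
  by (rule borel_measurable_continuous_onI[OF F_cont])

lemma gb_int: "integrable M (\<lambda>x. g w x \<bullet> b)"
  using g_int by simp

lemma gb_sq_int: "integrable M (\<lambda>x. (g w x \<bullet> b)^2)" if "b \<in> Basis"
proof (rule Bochner_Integration.integrable_bound[OF g_sq_int])
  show "(\<lambda>x. (g w x \<bullet> b)\<^sup>2) \<in> borel_measurable M" by measurable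
  show "AE x in M. norm ((g w x \<bullet> b)\<^sup>2) \<le> norm ((norm (g w x))\<^sup>2)"
  proof (intro AE_I2)
    fix x
    have "\<bar>g w x \<bullet> b\<bar> \<le> norm (g w x)" by (rule Basis_le_norm[OF that])
    hence "(g w x \<bullet> b)^2 \<le> (norm (g w x))^2"
      by (metis abs_ge_zero power2_abs power_mono)
    thus "norm ((g w x \<bullet> b)\<^sup>2) \<le> norm ((norm (g w x))\<^sup>2)" by simp
  qed
qed

lemma norm_sq_Basis: "(norm v)^2 = (\<Sum>b\<in>Basis. (v \<bullet> b)^2)"
proof -
  have "(norm v)^2 = v \<bullet> v" by (simp add: power2_norm_eq_inner)
  also have "\<dots> = (\<Sum>b\<in>Basis. (v \<bullet> b) * (v \<bullet> b))" by (rule euclidean_inner)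
  finally show ?thesis by (simp add: power2_eq_square)
qed

lemma grad_var_eq: "grad_var M g w = (\<integral>x. (norm (g w x))^2 \<partial>M) - (norm (gradF w))^2"
proof -
  have "grad_var M g w = (\<Sum>b\<in>Basis. \<integral>x. ((g w x - gradF w) \<bullet> b)^2 \<partial>M)"
    unfolding grad_var_def unbiased ..
  also have "\<dots> = (\<Sum>b\<in>Basis. (\<integral>x. (g w x \<bullet> b)^2 \<partial>M) - (gradF w \<bullet> b)^2)"
  proof (rule sum.cong[OF refl])
    fix b :: 'a assume b: "b \<in> Basis"
    have e: "((g w x - gradF w) \<bullet> b)^2 = (g w x \<bullet> b)^2 - 2 * (gradF w \<bullet> b) * (g w x \<bullet> b) + (gradF w \<bullet> b)^2" for x
      by (simp add: inner_diff_left power2_eq_square algebra_simps)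
    have "(\<integral>x. ((g w x - gradF w) \<bullet> b)^2 \<partial>M) = (\<integral>x. (g w x \<bullet> b)^2 \<partial>M) - 2 * (gradF w \<bullet> b) * (\<integral>x. g w x \<bullet> b \<partial>M) + (gradF w \<bullet> b)^2"
      unfolding e using gb_sq_int[OF b] gb_int by (simp add: M.prob_space)
    also have "(\<integral>x. g w x \<bullet> b \<partial>M) = gradF w \<bullet> b"
      using g_int unbiased by simp
    finally show "(\<integral>x. ((g w x - gradF w) \<bullet> b)^2 \<partial>M) = (\<integral>x. (g w x \<bullet> b)^2 \<partial>M) - (gradF w \<bullet> b)^2"
      by (simp add: power2_eq_square)
  qed
  also have "\<dots> = (\<integral>x. (\<Sum>b\<in>Basis. (g w x \<bullet> b)^2) \<partial>M) - (\<Sum>b\<in>Basis. (gradF w \<bullet> b)^2)"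
    using gb_sq_int by (simp add: sum_subtractf)
  also have "\<dots> = (\<integral>x. (norm (g w x))^2 \<partial>M) - (norm (gradF w))^2"
    by (simp add: norm_sq_Basis)
  finally show ?thesis .
qed

lemma grad_var_nonneg: "0 \<le> grad_var M g w"
  unfolding grad_var_def by (intro sum_nonneg integral_nonneg_AE) auto

lemma grad_var_meas[measurable]: "grad_var M g \<in> borel_measurable borel"
proof -
  have "(\<lambda>(w, x). (norm (g w x))^2) \<in> borel_measurable (borel \<Otimes>\<^sub>M M)"
    using g_meas by (simp add: case_prod_beta) measurable
  hence "(\<lambda>w. \<integral>x. (norm (g w x))^2 \<partial>M) \<in> borel_measurable borel"
    using M.borel_measurable_lebesgue_integral[of "\<lambda>w x. (norm (g w x))^2" borel] by simp
  thus ?thesis unfolding grad_var_eq[abs_def] by measurable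
qed

end

lemma (in prob_space) indep_blocks:
  assumes ind: "indep_vars M' X I" and AB: "A \<subseteq> I" "B \<subseteq> I" "A \<inter> B = {}"
  shows "indep_var (PiM A M') (\<lambda>\<omega>. restrict (\<lambda>i. X i \<omega>) A) (PiM B M') (\<lambda>\<omega>. restrict (\<lambda>i. X i \<omega>) B)"
proof -
  have "indep_vars (\<lambda>j. PiM (case_bool A B j) M') (\<lambda>j \<omega>. restrict (\<lambda>i. X i \<omega>) (case_bool A B j)) UNIV"
    using AB by (intro indep_vars_restrict[OF ind]) (auto simp: disjoint_family_on_def split: bool.splits)
  moreover have "(\<lambda>j. PiM (case_bool A B j) M') = case_bool (PiM A M') (PiM B M')"
    by (auto simp: fun_eq_iff split: bool.splits)
  moreover have "(\<lambda>j \<omega>. restrict (\<lambda>i. X i \<omega>) (case_bool A B j)) = case_bool (\<lambda>\<omega>. restrict (\<lambda>i. X i \<omega>) A) (\<lambda>\<omega>. restrict (\<lambda>i. X i \<omega>) B)"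
    by (auto simp: fun_eq_iff split: bool.splits)
  ultimately show ?thesis unfolding indep_var_def by simp
qed

locale adaP = adaM F gradF \<beta> Fstar M g
  for F :: "'a::euclidean_space \<Rightarrow> real" and gradF \<beta> Fstar and M :: "'x measure" and g +
  fixes P :: "'o measure" and xs :: "nat \<Rightarrow> nat \<Rightarrow> 'o \<Rightarrow> 'x" and S :: nat
  assumes P: "prob_space P"
    and batches_indep: "prob_space.indep_vars P (\<lambda>_. M) (\<lambda>(t, i). xs t i) (UNIV \<times> {..<S})"
    and batches_distr: "\<And>t i. i < S \<Longrightarrow> distr P M (xs t i) = M"
    and S_pos: "S \<ge> 1"
begin

interpretation M: prob_space M by (rule M)
interpretation P: prob_space P by (rule P)

lemma xs_meas: "i < S \<Longrightarrow> xs t i \<in> measurable P M"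
  using batches_indep unfolding P.indep_vars_def by auto

lemma G_int: "i < S \<Longrightarrow> integrable P (\<lambda>\<omega>. g w (xs t i \<omega>))"
  using integrable_distr_eq[OF xs_meas g_meas1, of i t w] batches_distr g_int by simp

lemma G_integral: "i < S \<Longrightarrow> (\<integral>\<omega>. g w (xs t i \<omega>) \<partial>P) = gradF w"
  using integral_distr[OF xs_meas g_meas1, of i t w] batches_distr unbiased by simp

lemma G_sq_int: "i < S \<Longrightarrow> integrable P (\<lambda>\<omega>. (norm (g w (xs t i \<omega>)))^2)"
  using integrable_distr_eq[where g="xs t i" and M=P and N=M and f="\<lambda>x. (norm (g w x))^2", OF xs_meas] batches_distr g_sq_int by simp

lemma G_sq_integral: "i < S \<Longrightarrow> (\<integral>\<omega>. (norm (g w (xs t i \<omega>)))^2 \<partial>P) = grad_var M g w + (norm (gradF w))^2"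
  using integral_distr[where g="xs t i" and M=P and N=M and f="\<lambda>x. (norm (g w x))^2", OF xs_meas] batches_distr grad_var_eq[of w] by simp

lemma G_meas[measurable]: "i < S \<Longrightarrow> (\<lambda>\<omega>. g w (xs t i \<omega>)) \<in> borel_measurable P"
  using measurable_compose[OF xs_meas g_meas1] by (simp add: o_def)

lemma GG_int: "i < S \<Longrightarrow> j < S \<Longrightarrow> integrable P (\<lambda>\<omega>. g w (xs t i \<omega>) \<bullet> g w (xs t j \<omega>))"
proof (rule Bochner_Integration.integrable_bound)
  assume ij: "i < S" "j < S"
  show "integrable P (\<lambda>\<omega>. (norm (g w (xs t i \<omega>)))^2 + (norm (g w (xs t j \<omega>)))^2)"
    using G_sq_int ij by auto
  show "(\<lambda>\<omega>. g w (xs t i \<omega>) \<bullet> g w (xs t j \<omega>)) \<in> borel_measurable P"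
    using ij by measurable
  show "AE \<omega> in P. norm (g w (xs t i \<omega>) \<bullet> g w (xs t j \<omega>)) \<le> norm ((norm (g w (xs t i \<omega>)))^2 + (norm (g w (xs t j \<omega>)))^2)"
  proof (intro AE_I2)
    fix \<omega>
    have "\<bar>g w (xs t i \<omega>) \<bullet> g w (xs t j \<omega>)\<bar> \<le> norm (g w (xs t i \<omega>)) * norm (g w (xs t j \<omega>))"
      by (rule Cauchy_Schwarz_ineq2)
    also have "\<dots> \<le> (norm (g w (xs t i \<omega>)))^2 + (norm (g w (xs t j \<omega>)))^2"
      using sum_squares_bound[of "norm (g w (xs t i \<omega>))" "norm (g w (xs t j \<omega>))"]
        mult_nonneg_nonneg[OF norm_ge_zero norm_ge_zero, of "g w (xs t i \<omega>)" "g w (xs t j \<omega>)"] by linarith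
    finally show "norm (g w (xs t i \<omega>) \<bullet> g w (xs t j \<omega>)) \<le> norm ((norm (g w (xs t i \<omega>)))^2 + (norm (g w (xs t j \<omega>)))^2)"
      by simp
  qed
qed

lemma GG_integral_diff:
  assumes ij: "i < S" "j < S" "i \<noteq> j"
  shows "(\<integral>\<omega>. g w (xs t i \<omega>) \<bullet> g w (xs t j \<omega>) \<partial>P) = (norm (gradF w))^2"
proof -
  let ?X = "\<lambda>(t, i). xs t i"
  have ind: "P.indep_var (PiM {(t,i)} (\<lambda>_. M)) (\<lambda>\<omega>. restrict (\<lambda>k. ?X k \<omega>) {(t,i)})
      (PiM {(t,j)} (\<lambda>_. M)) (\<lambda>\<omega>. restrict (\<lambda>k. ?X k \<omega>) {(t,j)})"
    using ij by (intro P.indep_blocks[OF batches_indep]) auto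
  have comp: "\<And>k b. (\<lambda>z. g w (z (t, k)) \<bullet> b) \<in> borel_measurable (PiM {(t,k)} (\<lambda>_. M))"
  proof -
    fix k b
    have "(\<lambda>z. z (t, k)) \<in> measurable (PiM {(t,k)} (\<lambda>_. M)) M"
      by (rule measurable_component_singleton) simp
    from measurable_compose[OF this g_meas1] show "(\<lambda>z. g w (z (t, k)) \<bullet> b) \<in> borel_measurable (PiM {(t,k)} (\<lambda>_. M))"
      by measurable
  qed
  have ind2: "P.indep_var borel (\<lambda>\<omega>. g w (xs t i \<omega>) \<bullet> b) borel (\<lambda>\<omega>. g w (xs t j \<omega>) \<bullet> b)" for b
    using P.indep_var_compose[OF ind comp comp] by (simp add: o_def)
  have "(\<integral>\<omega>. g w (xs t i \<omega>) \<bullet> g w (xs t j \<omega>) \<partial>P)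
      = (\<integral>\<omega>. (\<Sum>b\<in>Basis. (g w (xs t i \<omega>) \<bullet> b) * (g w (xs t j \<omega>) \<bullet> b)) \<partial>P)"
    by (subst euclidean_inner) rule
  also have "\<dots> = (\<Sum>b\<in>Basis. \<integral>\<omega>. (g w (xs t i \<omega>) \<bullet> b) * (g w (xs t j \<omega>) \<bullet> b) \<partial>P)"
    by (rule Bochner_Integration.integral_sum[where f="\<lambda>b \<omega>. (g w (xs t i \<omega>) \<bullet> b) * (g w (xs t j \<omega>) \<bullet> b)"])
       (intro P.indep_var_integrable ind2, use G_int ij in auto)
  also have "\<dots> = (\<Sum>b\<in>Basis. (gradF w \<bullet> b) * (gradF w \<bullet> b))"
  proof (rule sum.cong[OF refl])
    fix b :: 'a
    show "(\<integral>\<omega>. (g w (xs t i \<omega>) \<bullet> b) * (g w (xs t j \<omega>) \<bullet> b) \<partial>P) = (gradF w \<bullet> b) * (gradF w \<bullet> b)"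
      using P.indep_var_lebesgue_integral[OF ind2] G_int G_integral ij by simp
  qed
  also have "\<dots> = (norm (gradF w))^2"
    by (simp add: euclidean_inner[symmetric] power2_norm_eq_inner)
  finally show ?thesis .
qed

lemma GG_integral:
  assumes ij: "i < S" "j < S"
  shows "(\<integral>\<omega>. g w (xs t i \<omega>) \<bullet> g w (xs t j \<omega>) \<partial>P) = (norm (gradF w))^2 + (if i = j then grad_var M g w else 0)"
proof (cases "i = j")
  case True
  then show ?thesis using G_sq_integral[OF ij(1), of w t] by (simp add: power2_norm_eq_inner add.commute)
qed (use GG_integral_diff ij in auto)

end

context adaP begin

interpretation M: prob_space M by (rule M)
interpretation P: prob_space P by (rule P)

definition gbar where "gbar t w \<omega> = (1 / real S) *\<^sub>R (\<Sum>i<S. g w (xs t i \<omega>))"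

lemma gbar_meas[measurable]: "gbar t w \<in> borel_measurable P"
  unfolding gbar_def by (intro borel_measurable_scaleR borel_measurable_const borel_measurable_sum) auto

lemma gbar_int: "integrable P (gbar t w)"
  unfolding gbar_def by (intro integrable_scaleR_right Bochner_Integration.integrable_sum G_int) auto

lemma gbar_integral: "(\<integral>\<omega>. gbar t w \<omega> \<partial>P) = gradF w"
proof -
  have "(\<integral>\<omega>. gbar t w \<omega> \<partial>P) = (1 / real S) *\<^sub>R (\<Sum>i<S. \<integral>\<omega>. g w (xs t i \<omega>) \<partial>P)"
    unfolding gbar_def by (subst integral_scaleR_right, subst Bochner_Integration.integral_sum) (auto intro: G_int)
  also have "\<dots> = gradF w" using S_pos by (simp add: G_integral sum_constant_scaleR)
  finally show ?thesis .
qed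

lemma sum_sq: "(norm (\<Sum>i<S. g w (xs t i \<omega>)))^2 = (\<Sum>i<S. \<Sum>j<S. g w (xs t i \<omega>) \<bullet> g w (xs t j \<omega>))"
  by (simp add: power2_norm_eq_inner inner_sum_left inner_sum_right inner_commute)

lemma gbar_sq: "(norm (gbar t w \<omega>))^2 = (1 / real S)^2 * (\<Sum>i<S. \<Sum>j<S. g w (xs t i \<omega>) \<bullet> g w (xs t j \<omega>))"
  unfolding gbar_def sum_sq[symmetric] by (simp add: power_divide)

lemma gbar_sq_int: "integrable P (\<lambda>\<omega>. (norm (gbar t w \<omega>))^2)"
  unfolding gbar_sq by (intro integrable_mult_right Bochner_Integration.integrable_sum GG_int) auto

lemma gbar_sq_integral: "(\<integral>\<omega>. (norm (gbar t w \<omega>))^2 \<partial>P) = grad_var M g w / real S + (norm (gradF w))^2"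
proof -
  have "(\<integral>\<omega>. (norm (gbar t w \<omega>))^2 \<partial>P) = (1 / real S)^2 * (\<Sum>i<S. \<Sum>j<S. \<integral>\<omega>. g w (xs t i \<omega>) \<bullet> g w (xs t j \<omega>) \<partial>P)"
    unfolding gbar_sq
    by (subst integral_mult_right_zero, subst Bochner_Integration.integral_sum,
        auto intro!: Bochner_Integration.integrable_sum GG_int simp: Bochner_Integration.integral_sum GG_int)
  also have "\<dots> = (1 / real S)^2 * (\<Sum>i<S. \<Sum>j<S. (norm (gradF w))^2 + (if i = j then grad_var M g w else 0))"
    by (simp add: GG_integral)
  also have "\<dots> = (1 / real S)^2 * (real S * real S * (norm (gradF w))^2 + real S * grad_var M g w)"
    by (simp add: sum.distrib algebra_simps)
  also have "\<dots> = grad_var M g w / real S + (norm (gradF w))^2"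
    using S_pos by (simp add: field_simps power2_eq_square)
  finally show ?thesis .
qed

lemma gbar_inner_integral: "(\<integral>\<omega>. gradF w \<bullet> gbar t w \<omega> \<partial>P) = (norm (gradF w))^2"
  using gbar_int[of t w] by (simp add: gbar_integral power2_norm_eq_inner)

end

context adaP begin

interpretation M: prob_space M by (rule M)
interpretation P: prob_space P by (rule P)

lemma inner_step:
  shows "integrable P (\<lambda>\<omega>. F (w - c *\<^sub>R gbar t w \<omega>) - Fstar)"
    and "(\<integral>\<omega>. F (w - c *\<^sub>R gbar t w \<omega>) - Fstar \<partial>P)
         \<le> F w - Fstar - c * (norm (gradF w))^2 + \<beta> / 2 * c^2 * (grad_var M g w / real S + (norm (gradF w))^2)"
proof -
  define R where "R \<omega> = F w - Fstar - c * (gradF w \<bullet> gbar t w \<omega>) + \<beta> / 2 * c^2 * (norm (gbar t w \<omega>))^2" for \<omega>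
  have pw: "F (w - c *\<^sub>R gbar t w \<omega>) - Fstar \<le> R \<omega>" for \<omega>
  proof -
    have "F (w + (- c *\<^sub>R gbar t w \<omega>)) \<le> F w + gradF w \<bullet> (- c *\<^sub>R gbar t w \<omega>) + \<beta> / 2 * (norm (- c *\<^sub>R gbar t w \<omega>))^2"
      by (rule descent)
    thus ?thesis unfolding R_def by (simp add: power_mult_distrib)
  qed
  have Rint: "integrable P R"
    unfolding R_def using gbar_int[of t w] gbar_sq_int[of t w] by auto
  have Rintegral: "(\<integral>\<omega>. R \<omega> \<partial>P) = F w - Fstar - c * (norm (gradF w))^2 + \<beta> / 2 * c^2 * (grad_var M g w / real S + (norm (gradF w))^2)"
    unfolding R_def using gbar_int[of t w] gbar_sq_int[of t w]
    by (simp add: gbar_inner_integral gbar_sq_integral P.prob_space)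
  have meas: "(\<lambda>\<omega>. F (w - c *\<^sub>R gbar t w \<omega>) - Fstar) \<in> borel_measurable P"
    by measurable
  show int: "integrable P (\<lambda>\<omega>. F (w - c *\<^sub>R gbar t w \<omega>) - Fstar)"
  proof (rule Bochner_Integration.integrable_bound[OF Rint meas], intro AE_I2)
    fix \<omega>
    have "0 \<le> F (w - c *\<^sub>R gbar t w \<omega>) - Fstar" using Fstar_min by simp
    thus "norm (F (w - c *\<^sub>R gbar t w \<omega>) - Fstar) \<le> norm (R \<omega>)" using pw[of \<omega>] by simp
  qed
  have "(\<integral>\<omega>. F (w - c *\<^sub>R gbar t w \<omega>) - Fstar \<partial>P) \<le> (\<integral>\<omega>. R \<omega> \<partial>P)"
    by (rule integral_mono[OF int Rint pw])
  thus "(\<integral>\<omega>. F (w - c *\<^sub>R gbar t w \<omega>) - Fstar \<partial>P)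
         \<le> F w - Fstar - c * (norm (gradF w))^2 + \<beta> / 2 * c^2 * (grad_var M g w / real S + (norm (gradF w))^2)"
    using Rintegral by simp
qed

end

context adaP begin

interpretation M: prob_space M by (rule M)
interpretation P: prob_space P by (rule P)

primrec wdet :: "(nat \<Rightarrow> real) \<Rightarrow> 'a \<Rightarrow> nat \<Rightarrow> (nat \<times> nat \<Rightarrow> 'x) \<Rightarrow> 'a" where
  "wdet c w0 0 z = w0"
| "wdet c w0 (Suc t) z = wdet c w0 t z - c t *\<^sub>R ((1 / real S) *\<^sub>R (\<Sum>i<S. g (wdet c w0 t z) (z (t, i))))"

lemma wdet_local: "(\<And>j. j \<in> {..<t} \<times> {..<S} \<Longrightarrow> z j = z' j) \<Longrightarrow> wdet c w0 t z = wdet c w0 t z'"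
proof (induction t)
  case (Suc t)
  then have "wdet c w0 t z = wdet c w0 t z'" by auto
  moreover have "z (t, i) = z' (t, i)" if "i < S" for i using Suc.prems that by auto
  ultimately show ?case by simp
qed simp

lemma g_comp_meas:
  assumes "f \<in> borel_measurable N" "h \<in> measurable N M"
  shows "(\<lambda>x. g (f x) (h x)) \<in> borel_measurable N"
  using measurable_compose[OF measurable_Pair[OF assms] g_meas] by simp

lemma wdet_meas: "{..<t} \<times> {..<S} \<subseteq> J \<Longrightarrow> wdet c w0 t \<in> borel_measurable (PiM J (\<lambda>_. M))"
proof (induction t)
  case (Suc t)
  have "{..<t} \<times> {..<S} \<subseteq> J" using Suc.prems by auto
  hence IH: "wdet c w0 t \<in> borel_measurable (PiM J (\<lambda>_. M))" by (rule Suc.IH)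
  have comp: "(\<lambda>z. z (t, i)) \<in> measurable (PiM J (\<lambda>_. M)) M" if "i < S" for i
    using Suc.prems that by (intro measurable_component_singleton) auto
  have "(\<lambda>z. g (wdet c w0 t z) (z (t, i))) \<in> borel_measurable (PiM J (\<lambda>_. M))" if "i < S" for i
    by (rule g_comp_meas[OF IH comp[OF that]])
  then show ?case using IH
    by simp
next
  case 0
  have "wdet c w0 0 = (\<lambda>_. w0)" by (auto simp: fun_eq_iff)
  then show ?case by simp
qed

definition Xo where "Xo \<omega> = (\<lambda>(s, i). xs s i \<omega>)"

definition Wp where "Wp c w0 t \<omega> = wdet c w0 t (Xo \<omega>)"

lemma Wp_Suc: "Wp c w0 (Suc t) \<omega> = Wp c w0 t \<omega> - c t *\<^sub>R gbar t (Wp c w0 t \<omega>) \<omega>"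
  by (simp add: Wp_def gbar_def Xo_def)

lemma Xo_restrict_meas: "J \<subseteq> UNIV \<times> {..<S} \<Longrightarrow> (\<lambda>\<omega>. restrict (Xo \<omega>) J) \<in> measurable P (PiM J (\<lambda>_. M))"
  unfolding Xo_def by (intro measurable_restrict) (auto intro: xs_meas)

lemma Wp_restrict: "Wp c w0 t \<omega> = wdet c w0 t (restrict (Xo \<omega>) ({..<t} \<times> {..<S}))"
  unfolding Wp_def by (rule wdet_local) simp

lemma Wp_meas[measurable]: "Wp c w0 t \<in> borel_measurable P"
proof -
  have "(\<lambda>\<omega>. wdet c w0 t (restrict (Xo \<omega>) ({..<t} \<times> {..<S}))) \<in> borel_measurable P"
    by (rule measurable_compose[OF Xo_restrict_meas wdet_meas]) auto
  thus ?thesis by (simp add: Wp_restrict[abs_def])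
qed

end

context adaP begin

interpretation M: prob_space M by (rule M)
interpretation P: prob_space P by (rule P)

definition psi where
  "psi a w = F w - Fstar - a * (norm (gradF w))^2 + \<beta> / 2 * a^2 * (grad_var M g w / real S + (norm (gradF w))^2)"

lemma psi_meas[measurable]: "psi a \<in> borel_measurable borel"
  unfolding psi_def by measurable

lemma psi_nonneg: "0 \<le> psi a w"
proof -
  have "0 \<le> (\<integral>\<omega>. F (w - a *\<^sub>R gbar 0 w \<omega>) - Fstar \<partial>P)"
    using Fstar_min by (intro integral_nonneg_AE) auto
  also have "\<dots> \<le> psi a w" unfolding psi_def by (rule inner_step(2))
  finally show ?thesis .
qed

lemma step_nn:
  "(\<integral>\<^sup>+\<omega>. ennreal (F (Wp c w0 (Suc t) \<omega>) - Fstar) \<partial>P) \<le> (\<integral>\<^sup>+\<omega>. ennreal (psi (c t) (Wp c w0 t \<omega>)) \<partial>P)"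
proof -
  define A where "A = {..<t} \<times> {..<S}"
  define B where "B = {t} \<times> {..<S}"
  define Z where "Z \<omega> = restrict (Xo \<omega>) A" for \<omega>
  define Bb where "Bb \<omega> = restrict (Xo \<omega>) B" for \<omega>
  define MA where "MA = PiM A (\<lambda>_. M)"
  define MB where "MB = PiM B (\<lambda>_. M)"
  define stepf where "stepf p = wdet c w0 t (fst p) - c t *\<^sub>R ((1 / real S) *\<^sub>R (\<Sum>i<S. g (wdet c w0 t (fst p)) (snd p (t, i))))" for p
  define h where "h p = ennreal (F (stepf p) - Fstar)" for p
  have AB: "A \<subseteq> UNIV \<times> {..<S}" "B \<subseteq> UNIV \<times> {..<S}" "A \<inter> B = {}"
    unfolding A_def B_def by auto
  have ind0: "P.indep_var MA (\<lambda>\<omega>. restrict (\<lambda>i. (\<lambda>(t, i). xs t i) i \<omega>) A) MB (\<lambda>\<omega>. restrict (\<lambda>i. (\<lambda>(t, i). xs t i) i \<omega>) B)"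
    unfolding MA_def MB_def by (rule P.indep_blocks[OF batches_indep AB])
  have "(\<lambda>\<omega>. restrict (\<lambda>i. (\<lambda>(t, i). xs t i) i \<omega>) A) = Z" "(\<lambda>\<omega>. restrict (\<lambda>i. (\<lambda>(t, i). xs t i) i \<omega>) B) = Bb"
    by (auto simp: Z_def Bb_def Xo_def fun_eq_iff)
  with ind0 have ind: "P.indep_var MA Z MB Bb" by simp
  have Zm: "Z \<in> measurable P MA" and Bm: "Bb \<in> measurable P MB"
    unfolding Z_def Bb_def MA_def MB_def using Xo_restrict_meas AB by auto
  define nZ where "nZ = distr P MA Z"
  define nB where "nB = distr P MB Bb"
  have joint: "nZ \<Otimes>\<^sub>M nB = distr P (MA \<Otimes>\<^sub>M MB) (\<lambda>\<omega>. (Z \<omega>, Bb \<omega>))"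
    using ind unfolding nZ_def nB_def P.indep_var_distribution_eq by simp
  interpret nB: prob_space nB unfolding nB_def by (rule P.prob_space_distr[OF Bm])
  interpret nZ: prob_space nZ unfolding nZ_def by (rule P.prob_space_distr[OF Zm])
  have wm: "wdet c w0 t \<in> borel_measurable MA"
    unfolding MA_def A_def by (rule wdet_meas) simp
  have stepf_meas: "stepf \<in> borel_measurable (MA \<Otimes>\<^sub>M MB)"
  proof -
    have w1: "(\<lambda>p. wdet c w0 t (fst p)) \<in> borel_measurable (MA \<Otimes>\<^sub>M MB)"
      by (rule measurable_compose[OF measurable_fst wm])
    have c1: "(\<lambda>p. snd p (t, i)) \<in> measurable (MA \<Otimes>\<^sub>M MB) M" if "i < S" for i
    proof -
      have "(\<lambda>z. z (t, i)) \<in> measurable MB M"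
        unfolding MB_def B_def using that by (intro measurable_component_singleton) auto
      from measurable_compose[OF measurable_snd this] show ?thesis .
    qed
    have "(\<lambda>p. g (wdet c w0 t (fst p)) (snd p (t, i))) \<in> borel_measurable (MA \<Otimes>\<^sub>M MB)" if "i < S" for i
      by (rule g_comp_meas[OF w1 c1[OF that]])
    then show ?thesis unfolding stepf_def using w1 by simp
  qed
  have h_meas: "h \<in> borel_measurable (MA \<Otimes>\<^sub>M MB)"
    unfolding h_def using stepf_meas by measurable
  have h_meas': "h \<in> borel_measurable (nZ \<Otimes>\<^sub>M nB)"
    using h_meas unfolding nZ_def nB_def
    by (subst measurable_cong_sets[OF sets_pair_measure_cong[OF sets_distr sets_distr] refl])
  have pt: "ennreal (F (Wp c w0 (Suc t) \<omega>) - Fstar) = h (Z \<omega>, Bb \<omega>)" for \<omega>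
  proof -
    have "Wp c w0 t \<omega> = wdet c w0 t (Z \<omega>)" unfolding Z_def A_def by (rule Wp_restrict)
    moreover have "(\<Sum>i<S. g w (xs t i \<omega>)) = (\<Sum>i<S. g w (Bb \<omega> (t, i)))" for w
      by (rule sum.cong) (auto simp: Bb_def B_def Xo_def)
    ultimately show ?thesis unfolding h_def stepf_def Wp_Suc gbar_def by simp
  qed
  have "(\<integral>\<^sup>+\<omega>. ennreal (F (Wp c w0 (Suc t) \<omega>) - Fstar) \<partial>P) = (\<integral>\<^sup>+\<omega>. h (Z \<omega>, Bb \<omega>) \<partial>P)"
    by (simp add: pt)
  also have "\<dots> = (\<integral>\<^sup>+p. h p \<partial>(distr P (MA \<Otimes>\<^sub>M MB) (\<lambda>\<omega>. (Z \<omega>, Bb \<omega>))))"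
    by (rule nn_integral_distr[symmetric]) (use Zm Bm h_meas in auto)
  also have "\<dots> = (\<integral>\<^sup>+p. h p \<partial>(nZ \<Otimes>\<^sub>M nB))" by (simp add: joint)
  also have "\<dots> = (\<integral>\<^sup>+z. \<integral>\<^sup>+b. h (z, b) \<partial>nB \<partial>nZ)"
    by (rule nB.nn_integral_fst[symmetric, OF h_meas'])
  also have "\<dots> \<le> (\<integral>\<^sup>+z. ennreal (psi (c t) (wdet c w0 t z)) \<partial>nZ)"
  proof (rule nn_integral_mono)
    fix z assume zsp: "z \<in> space nZ"
    hence zsp': "z \<in> space MA" unfolding nZ_def by simp
    define w where "w = wdet c w0 t z"
    have hz: "(\<lambda>b. h (z, b)) \<in> borel_measurable MB"
      by (rule measurable_Pair2[OF h_meas zsp'])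
    have "(\<integral>\<^sup>+b. h (z, b) \<partial>nB) = (\<integral>\<^sup>+\<omega>. h (z, Bb \<omega>) \<partial>P)"
      unfolding nB_def by (rule nn_integral_distr[OF Bm]) (use hz in simp)
    also have "\<dots> = (\<integral>\<^sup>+\<omega>. ennreal (F (w - c t *\<^sub>R gbar t w \<omega>) - Fstar) \<partial>P)"
    proof (rule nn_integral_cong)
      fix \<omega>
      have "(\<Sum>i<S. g w (xs t i \<omega>)) = (\<Sum>i<S. g w (Bb \<omega> (t, i)))"
        by (rule sum.cong) (auto simp: Bb_def B_def Xo_def)
      then show "h (z, Bb \<omega>) = ennreal (F (w - c t *\<^sub>R gbar t w \<omega>) - Fstar)"
        unfolding h_def stepf_def gbar_def w_def by simp
    qed
    also have "\<dots> = ennreal (\<integral>\<omega>. F (w - c t *\<^sub>R gbar t w \<omega>) - Fstar \<partial>P)"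
      by (rule nn_integral_eq_integral[OF inner_step(1)]) (use Fstar_min in auto)
    also have "\<dots> \<le> ennreal (psi (c t) w)"
      unfolding psi_def by (intro ennreal_leI inner_step(2))
    finally show "(\<integral>\<^sup>+b. h (z, b) \<partial>nB) \<le> ennreal (psi (c t) (wdet c w0 t z))"
      unfolding w_def .
  qed
  also have "\<dots> = (\<integral>\<^sup>+\<omega>. ennreal (psi (c t) (wdet c w0 t (Z \<omega>))) \<partial>P)"
    unfolding nZ_def by (rule nn_integral_distr[OF Zm]) (use wm in measurable)
  also have "\<dots> = (\<integral>\<^sup>+\<omega>. ennreal (psi (c t) (Wp c w0 t \<omega>)) \<partial>P)"
    by (simp add: Z_def A_def Wp_restrict[symmetric])
  finally show ?thesis .
qed

end

locale adaR = adaP F gradF \<beta> Fstar M g P xs S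
  for F :: "'a::euclidean_space \<Rightarrow> real" and gradF \<beta> Fstar and M :: "'x measure" and g
    and P :: "'o measure" and xs S +
  fixes V :: real
  assumes V_nonneg: "V \<ge> 0" and bounded_var: "\<And>w. grad_var M g w \<le> V"
begin

interpretation M: prob_space M by (rule M)
interpretation P: prob_space P by (rule P)

lemma sig_le: "grad_var M g w / real S \<le> V"
proof -
  have "grad_var M g w / real S \<le> grad_var M g w"
    using S_pos grad_var_nonneg[of w] by (simp add: divide_le_eq mult_le_cancel_left1)
  thus ?thesis using bounded_var[of w] by linarith
qed

lemma step_int:
  assumes int: "integrable P (\<lambda>\<omega>. F (Wp c w0 t \<omega>) - Fstar)"
  shows "integrable P (\<lambda>\<omega>. (norm (gradF (Wp c w0 t \<omega>)))^2)"
    and "integrable P (\<lambda>\<omega>. grad_var M g (Wp c w0 t \<omega>))"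
    and "integrable P (\<lambda>\<omega>. psi (c t) (Wp c w0 t \<omega>))"
    and "integrable P (\<lambda>\<omega>. F (Wp c w0 (Suc t) \<omega>) - Fstar)"
    and "(\<integral>\<omega>. F (Wp c w0 (Suc t) \<omega>) - Fstar \<partial>P) \<le> (\<integral>\<omega>. psi (c t) (Wp c w0 t \<omega>) \<partial>P)"
proof -
  let ?W = "Wp c w0 t"
  let ?a = "c t"
  show mu_int: "integrable P (\<lambda>\<omega>. (norm (gradF (?W \<omega>)))^2)"
  proof (rule Bochner_Integration.integrable_bound[of _ "\<lambda>\<omega>. 2 * \<beta> * (F (?W \<omega>) - Fstar)"])
    show "integrable P (\<lambda>\<omega>. 2 * \<beta> * (F (?W \<omega>) - Fstar))" using int by simp
    show "(\<lambda>\<omega>. (norm (gradF (?W \<omega>)))^2) \<in> borel_measurable P" by measurable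
    show "AE \<omega> in P. norm ((norm (gradF (?W \<omega>)))^2) \<le> norm (2 * \<beta> * (F (?W \<omega>) - Fstar))"
      using grad_bound by (auto intro!: AE_I2 simp: abs_of_nonneg \<beta>_pos less_imp_le)
        (metis abs_of_nonneg dual_order.trans grad_bound zero_le_power2)
  qed
  show sig_int: "integrable P (\<lambda>\<omega>. grad_var M g (?W \<omega>))"
  proof (rule Bochner_Integration.integrable_bound[of _ "\<lambda>\<omega>. V"])
    show "integrable P (\<lambda>\<omega>. V)" by simp
    show "(\<lambda>\<omega>. grad_var M g (?W \<omega>)) \<in> borel_measurable P" by measurable
    show "AE \<omega> in P. norm (grad_var M g (?W \<omega>)) \<le> norm V"
      using bounded_var grad_var_nonneg V_nonneg by (auto intro!: AE_I2)
  qed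
  show psi_int: "integrable P (\<lambda>\<omega>. psi ?a (?W \<omega>))"
    unfolding psi_def using int mu_int sig_int by auto
  have nn: "(\<integral>\<^sup>+\<omega>. ennreal (F (Wp c w0 (Suc t) \<omega>) - Fstar) \<partial>P) \<le> ennreal (\<integral>\<omega>. psi ?a (?W \<omega>) \<partial>P)"
    using step_nn[of c w0 t] nn_integral_eq_integral[OF psi_int] psi_nonneg by simp
  show int2: "integrable P (\<lambda>\<omega>. F (Wp c w0 (Suc t) \<omega>) - Fstar)"
  proof (rule integrableI_bounded)
    show "(\<lambda>\<omega>. F (Wp c w0 (Suc t) \<omega>) - Fstar) \<in> borel_measurable P" by measurable
    have "(\<integral>\<^sup>+\<omega>. ennreal (norm (F (Wp c w0 (Suc t) \<omega>) - Fstar)) \<partial>P) = (\<integral>\<^sup>+\<omega>. ennreal (F (Wp c w0 (Suc t) \<omega>) - Fstar) \<partial>P)"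
      using Fstar_min by (intro nn_integral_cong) simp
    also have "\<dots> < \<infinity>" using nn by (simp add: le_less_trans)
    finally show "(\<integral>\<^sup>+\<omega>. ennreal (norm (F (Wp c w0 (Suc t) \<omega>) - Fstar)) \<partial>P) < \<infinity>" .
  qed
  have "ennreal (\<integral>\<omega>. F (Wp c w0 (Suc t) \<omega>) - Fstar \<partial>P) \<le> ennreal (\<integral>\<omega>. psi ?a (?W \<omega>) \<partial>P)"
    using nn nn_integral_eq_integral[OF int2] Fstar_min by simp
  moreover have "0 \<le> (\<integral>\<omega>. psi ?a (?W \<omega>) \<partial>P)" using psi_nonneg by (simp add: integral_nonneg_AE)
  ultimately show "(\<integral>\<omega>. F (Wp c w0 (Suc t) \<omega>) - Fstar \<partial>P) \<le> (\<integral>\<omega>. psi ?a (?W \<omega>) \<partial>P)"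
    by (simp add: ennreal_le_iff)
qed

end

locale adaG = adaR F gradF \<beta> Fstar M g P xs S V
  for F :: "'a::euclidean_space \<Rightarrow> real" and gradF \<beta> Fstar and M :: "'x measure" and g
    and P :: "'o measure" and xs S V +
  fixes \<alpha> \<eta> :: real
  assumes \<alpha>_pos: "\<alpha> > 0"
    and PL: "\<And>w. F w - Fstar \<le> 1 / (2 * \<alpha>) * (norm (gradF w))^2"
    and \<eta>_pos: "0 < \<eta>" and \<eta>_bound: "\<eta> < 2 / \<beta>"
    and S_bound: "real S \<le> 1 / (\<eta> * \<alpha> * (2 - \<eta> * \<beta>))"
begin

interpretation M: prob_space M by (rule M)
interpretation P: prob_space P by (rule P)

definition gam where "gam = \<eta> * \<alpha> * (2 - \<eta> * \<beta>)"
definition Del where "Del = 1 / (2 * gam) * \<eta>^2 * \<beta> * V"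

lemma eb: "\<eta> * \<beta> < 2" using \<eta>_bound \<beta>_pos by (simp add: field_simps)

lemma gam_pos: "0 < gam" unfolding gam_def using \<eta>_pos \<alpha>_pos eb by simp

lemma S_gam: "real S * gam \<le> 1"
  using S_bound gam_pos unfolding gam_def[symmetric] by (simp add: field_simps)

lemma gam_le1: "gam \<le> 1" using S_gam S_pos gam_pos
  by (metis dual_order.trans mult_le_cancel_right1 of_nat_1 of_nat_le_iff order.strict_iff_not)

lemma Del_nonneg: "0 \<le> Del" unfolding Del_def using gam_pos \<beta>_pos V_nonneg by simp

lemma gamDel: "gam * Del = \<eta>^2 * \<beta> * V / 2" unfolding Del_def using gam_pos by (simp add: field_simps)

lemma one_step:
  fixes c w0 t
  defines "r \<equiv> gain_ratio P S (grad_var M g) (grad_sqnorm gradF) (Wp c w0 t)"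
  assumes int: "integrable P (\<lambda>\<omega>. F (Wp c w0 t \<omega>) - Fstar)"
    and hc: "c t = r * \<eta>"
  shows "1 \<le> r" "r \<le> real S" "integrable P (\<lambda>\<omega>. F (Wp c w0 (Suc t) \<omega>) - Fstar)"
    "(\<integral>\<omega>. F (Wp c w0 (Suc t) \<omega>) - Fstar \<partial>P) \<le> (1 - r * gam) * (\<integral>\<omega>. F (Wp c w0 t \<omega>) - Fstar \<partial>P) + r * gam * Del"
proof -
  let ?W = "Wp c w0 t"
  define s2 where "s2 = (\<integral>\<omega>. grad_var M g (?W \<omega>) \<partial>P)"
  define m2 where "m2 = (\<integral>\<omega>. (norm (gradF (?W \<omega>)))^2 \<partial>P)"
  define e where "e = (\<integral>\<omega>. F (?W \<omega>) - Fstar \<partial>P)"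
  note mu_int = step_int(1)[OF int] and sig_int = step_int(2)[OF int]
  have s2_nn: "0 \<le> s2" unfolding s2_def using grad_var_nonneg by (simp add: integral_nonneg_AE)
  have m2_nn: "0 \<le> m2" unfolding m2_def by (simp add: integral_nonneg_AE)
  have s2_V: "s2 \<le> V"
  proof -
    have "s2 \<le> (\<integral>\<omega>. V \<partial>P)" unfolding s2_def
      by (rule integral_mono[OF sig_int]) (auto intro: bounded_var)
    thus ?thesis by (simp add: P.prob_space)
  qed
  have e_PL: "2 * \<alpha> * e \<le> m2"
  proof -
    have "e \<le> (\<integral>\<omega>. 1 / (2 * \<alpha>) * (norm (gradF (?W \<omega>)))^2 \<partial>P)" unfolding e_def
      by (rule integral_mono[OF int]) (use mu_int PL in auto)
    also have "\<dots> = m2 / (2 * \<alpha>)" unfolding m2_def by simp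
    finally show ?thesis using \<alpha>_pos by (simp add: field_simps)
  qed
  have e_nn: "0 \<le> e" unfolding e_def using Fstar_min by (simp add: integral_nonneg_AE)
  have Sp: "0 < real S" using S_pos by simp
  have num: "(\<integral>\<omega>. grad_var M g (?W \<omega>) + grad_sqnorm gradF (?W \<omega>) \<partial>P) = s2 + m2"
    unfolding s2_def m2_def grad_sqnorm_def using mu_int sig_int by simp
  have den: "(\<integral>\<omega>. grad_var M g (?W \<omega>) / real S + grad_sqnorm gradF (?W \<omega>) \<partial>P) = s2 / real S + m2"
    unfolding s2_def m2_def grad_sqnorm_def using mu_int sig_int by simp
  have r_eq: "r = (if s2 / real S + m2 = 0 then 1 else (s2 + m2) / (s2 / real S + m2))"
    unfolding r_def gain_ratio_def Let_def num den ..
  have psi_int: "(\<integral>\<omega>. psi (c t) (?W \<omega>) \<partial>P) = e - c t * m2 + \<beta> / 2 * (c t)^2 * (s2 / real S + m2)"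
    unfolding psi_def e_def s2_def m2_def using int mu_int sig_int by simp
  have main: "(\<integral>\<omega>. F (Wp c w0 (Suc t) \<omega>) - Fstar \<partial>P) \<le> e - c t * m2 + \<beta> / 2 * (c t)^2 * (s2 / real S + m2)"
    using step_int(5)[OF int] psi_int by simp
  show "integrable P (\<lambda>\<omega>. F (Wp c w0 (Suc t) \<omega>) - Fstar)" by (rule step_int(4)[OF int])
  show "1 \<le> r" "r \<le> real S" "(\<integral>\<omega>. F (Wp c w0 (Suc t) \<omega>) - Fstar \<partial>P) \<le> (1 - r * gam) * e + r * gam * Del"
  proof (atomize(full), cases "s2 / real S + m2 = 0")
    case True
    have q: "0 \<le> s2 / real S" using s2_nn Sp by simp
    hence "m2 = 0" "s2 / real S = 0" using True m2_nn by linarith+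
    hence "s2 = 0" "m2 = 0" using Sp by simp_all
    hence "2 * \<alpha> * e \<le> 0" using e_PL by simp
    moreover have "0 \<le> 2 * \<alpha> * e" using e_nn \<alpha>_pos by simp
    ultimately have "2 * \<alpha> * e = 0" by linarith
    hence "e = 0" using \<alpha>_pos by simp
    have r1: "r = 1" using r_eq True by simp
    have "(\<integral>\<omega>. F (Wp c w0 (Suc t) \<omega>) - Fstar \<partial>P) \<le> 0" using main \<open>e = 0\<close> \<open>s2 = 0\<close> \<open>m2 = 0\<close> by simp
    moreover have "0 \<le> gam * Del" using gam_pos Del_nonneg by simp
    ultimately show "1 \<le> r \<and> r \<le> real S \<and> (\<integral>\<omega>. F (Wp c w0 (Suc t) \<omega>) - Fstar \<partial>P) \<le> (1 - r * gam) * e + r * gam * Del"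
      using r1 \<open>e = 0\<close> S_pos by simp
  next
    case False
    define d where "d = s2 / real S + m2"
    have "0 \<le> s2 / real S" using s2_nn Sp by simp
    hence dpos: "0 < d" using False m2_nn unfolding d_def by linarith
    have r_def': "r = (s2 + m2) / d" using r_eq False unfolding d_def by simp
    have rd: "r * d = s2 + m2" using r_def' dpos by simp
    have "s2 / real S \<le> s2" using S_pos s2_nn by (simp add: divide_le_eq mult_le_cancel_left1)
    hence r1: "1 \<le> r" using r_def' dpos unfolding d_def by (simp add: le_divide_eq)
    have Sd: "real S * d = s2 + real S * m2" using Sp by (simp add: d_def distrib_left)
    have "1 * m2 \<le> real S * m2" using S_pos m2_nn by (intro mult_right_mono) auto
    hence "s2 + m2 \<le> real S * d" using Sd by simp
    hence r2: "r \<le> real S" using r_def' dpos by (simp add: divide_le_eq)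
    have "(\<integral>\<omega>. F (Wp c w0 (Suc t) \<omega>) - Fstar \<partial>P) \<le> e - r * \<eta> * m2 + \<beta> / 2 * (r * \<eta>)^2 * d"
      using main hc unfolding d_def by simp
    also have "\<beta> / 2 * (r * \<eta>)^2 * d = \<beta> / 2 * r * \<eta>^2 * (s2 + m2)"
      by (simp add: power2_eq_square rd[symmetric])
    also have "e - r * \<eta> * m2 + \<beta> / 2 * r * \<eta>^2 * (s2 + m2) = e - r * \<eta> * (1 - \<eta> * \<beta> / 2) * m2 + r * (\<beta> * \<eta>^2 / 2) * s2"
      by (simp add: algebra_simps power2_eq_square)
    also have "\<dots> \<le> e - r * \<eta> * (1 - \<eta> * \<beta> / 2) * (2 * \<alpha> * e) + r * (\<beta> * \<eta>^2 / 2) * V"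
    proof -
      have c1: "0 \<le> r * \<eta> * (1 - \<eta> * \<beta> / 2)" using r1 \<eta>_pos eb by simp
      have c2: "0 \<le> r * (\<beta> * \<eta>^2 / 2)" using r1 \<beta>_pos by simp
      show ?thesis using mult_left_mono[OF e_PL c1] mult_left_mono[OF s2_V c2] by linarith
    qed
    also have "\<dots> = (1 - r * gam) * e + r * gam * Del"
    proof -
      have "r * gam * Del = r * (gam * Del)" by simp
      also have "\<dots> = r * (\<beta> * \<eta>^2 / 2) * V" by (simp add: gamDel algebra_simps)
      finally have a: "r * gam * Del = r * (\<beta> * \<eta>^2 / 2) * V" .
      have b: "r * gam * e = r * \<eta> * (1 - \<eta> * \<beta> / 2) * (2 * \<alpha> * e)"
        unfolding gam_def by (simp add: algebra_simps)
      have "(1 - r * gam) * e + r * gam * Del = e - r * gam * e + r * gam * Del" by (simp add: algebra_simps)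
      then show ?thesis using a b by linarith
    qed
    finally show "1 \<le> r \<and> r \<le> real S \<and> (\<integral>\<omega>. F (Wp c w0 (Suc t) \<omega>) - Fstar \<partial>P) \<le> (1 - r * gam) * e + r * gam * Del"
      using r1 r2 by simp
  qed
qed

end

lemma powr_bernoulli:
  fixes x r :: real
  assumes x: "0 \<le> x" "x \<le> 1" and r: "1 \<le> r"
  shows "1 - r * (1 - x) \<le> x powr r"
proof (cases "x = 0")
  case True then show ?thesis using r by simp
next
  case False
  hence xp: "0 < x" using x by simp
  define h where "h y = y powr r - 1 - r * (y - 1)" for y
  have "h x \<ge> h 1"
  proof (rule DERIV_nonpos_imp_nonincreasing[OF x(2)])
    fix y assume y: "x \<le> y" "y \<le> 1"
    hence yp: "0 < y" using xp by simp
    have "DERIV h y :> r * y powr (r - 1) - r"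
      unfolding h_def using yp by (auto intro!: derivative_eq_intros)
    moreover have "y powr (r - 1) \<le> 1"
      using yp y r by (simp add: powr_le1)
    hence "r * y powr (r - 1) - r \<le> 0" using r by (simp add: mult_le_cancel_left1)
    ultimately show "\<exists>d. DERIV h y :> d \<and> d \<le> 0" by blast
  qed
  thus ?thesis unfolding h_def by (simp add: algebra_simps)
qed

lemma prod_powr_Suc: "(\<Prod>s<Suc n. (x::real) powr f s) = x powr (\<Sum>s<Suc n. f s)"
proof (induction n)
  case (Suc n)
  have "(\<Prod>s<Suc (Suc n). x powr f s) = (\<Prod>s<Suc n. x powr f s) * x powr f (Suc n)" by simp
  also have "\<dots> = x powr (\<Sum>s<Suc n. f s) * x powr f (Suc n)" using Suc by simp
  also have "\<dots> = x powr (\<Sum>s<Suc (Suc n). f s)" by (simp add: powr_add)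
  finally show ?case .
qed simp

context adaG begin

interpretation M: prob_space M by (rule M)
interpretation P: prob_space P by (rule P)

lemma rec_bound:
  fixes c w0
  assumes hc: "\<And>t. c t = gain_ratio P S (grad_var M g) (grad_sqnorm gradF) (Wp c w0 t) * \<eta>"
  shows "integrable P (\<lambda>\<omega>. F (Wp c w0 t \<omega>) - Fstar)
     \<and> (\<integral>\<omega>. F (Wp c w0 t \<omega>) - Fstar \<partial>P)
         \<le> (\<Prod>s<t. 1 - gain_ratio P S (grad_var M g) (grad_sqnorm gradF) (Wp c w0 s) * gam) * (F w0 - Fstar) + Del
     \<and> (\<forall>s<t. 1 \<le> gain_ratio P S (grad_var M g) (grad_sqnorm gradF) (Wp c w0 s)
               \<and> gain_ratio P S (grad_var M g) (grad_sqnorm gradF) (Wp c w0 s) \<le> real S)"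
proof (induction t)
  case 0
  have W0: "Wp c w0 0 \<omega> = w0" for \<omega> by (simp add: Wp_def)
  show ?case using Del_nonneg by (simp add: W0 P.prob_space)
next
  case (Suc t)
  let ?r = "\<lambda>s. gain_ratio P S (grad_var M g) (grad_sqnorm gradF) (Wp c w0 s)"
  from Suc.IH have int: "integrable P (\<lambda>\<omega>. F (Wp c w0 t \<omega>) - Fstar)"
    and bnd: "(\<integral>\<omega>. F (Wp c w0 t \<omega>) - Fstar \<partial>P) \<le> (\<Prod>s<t. 1 - ?r s * gam) * (F w0 - Fstar) + Del"
    and rs: "\<forall>s<t. 1 \<le> ?r s \<and> ?r s \<le> real S" by auto
  note os = one_step[of c w0 t, OF int hc]
  have fac: "0 \<le> 1 - ?r t * gam"
  proof -
    have "?r t * gam \<le> real S * gam" using os(2) gam_pos by (intro mult_right_mono) auto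
    thus ?thesis using S_gam by linarith
  qed
  have "(\<integral>\<omega>. F (Wp c w0 (Suc t) \<omega>) - Fstar \<partial>P) \<le> (1 - ?r t * gam) * (\<integral>\<omega>. F (Wp c w0 t \<omega>) - Fstar \<partial>P) + ?r t * gam * Del"
    by (rule os(4))
  also have "\<dots> \<le> (1 - ?r t * gam) * ((\<Prod>s<t. 1 - ?r s * gam) * (F w0 - Fstar) + Del) + ?r t * gam * Del"
    using mult_left_mono[OF bnd fac] by simp
  also have "\<dots> = (\<Prod>s<Suc t. 1 - ?r s * gam) * (F w0 - Fstar) + Del"
    by (simp add: algebra_simps)
  finally show ?case using os rs less_Suc_eq by auto
qed

lemma final_bound:
  fixes c w0 T
  assumes hc: "\<And>t. c t = gain_ratio P S (grad_var M g) (grad_sqnorm gradF) (Wp c w0 t) * \<eta>"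
    and T: "T \<noteq> 0"
  shows "(\<integral>\<omega>. F (Wp c w0 T \<omega>) - Fstar \<partial>P)
     \<le> (1 - gam) powr (\<Sum>s<T. gain_ratio P S (grad_var M g) (grad_sqnorm gradF) (Wp c w0 s)) * (F w0 - Fstar) + Del"
proof -
  let ?r = "\<lambda>s. gain_ratio P S (grad_var M g) (grad_sqnorm gradF) (Wp c w0 s)"
  note rb = rec_bound[OF hc, of T]
  obtain n where n: "T = Suc n" using T not0_implies_Suc by blast
  have "(\<Prod>s<T. 1 - ?r s * gam) \<le> (\<Prod>s<T. (1 - gam) powr ?r s)"
  proof (rule prod_mono)
    fix s assume "s \<in> {..<T}"
    hence r: "1 \<le> ?r s" "?r s \<le> real S" using rb by auto
    have "?r s * gam \<le> real S * gam" using r gam_pos by (intro mult_right_mono) auto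
    hence "0 \<le> 1 - ?r s * gam" using S_gam by linarith
    moreover have "1 - ?r s * (1 - (1 - gam)) \<le> (1 - gam) powr ?r s"
      using gam_pos gam_le1 r by (intro powr_bernoulli) auto
    ultimately show "0 \<le> 1 - ?r s * gam \<and> 1 - ?r s * gam \<le> (1 - gam) powr ?r s" by simp
  qed
  also have "\<dots> = (1 - gam) powr (\<Sum>s<T. ?r s)" unfolding n by (rule prod_powr_Suc)
  finally have pr: "(\<Prod>s<T. 1 - ?r s * gam) \<le> (1 - gam) powr (\<Sum>s<T. ?r s)" .
  have "0 \<le> F w0 - Fstar" using Fstar_min by simp
  from mult_right_mono[OF pr this] rb show ?thesis by linarith
qed

end

lemma st_Suc: "adascale_state P M g gradF S lr w0 xs (Suc t) =
   ((\<lambda>\<omega>. fst (adascale_state P M g gradF S lr w0 xs t) \<omega> -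
       (gain_ratio P S (grad_var M g) (grad_sqnorm gradF) (fst (adascale_state P M g gradF S lr w0 xs t)) * lr (nat \<lfloor>snd (adascale_state P M g gradF S lr w0 xs t)\<rfloor>))
        *\<^sub>R ((1 / real S) *\<^sub>R (\<Sum>i<S. g (fst (adascale_state P M g gradF S lr w0 xs t) \<omega>) (xs t i \<omega>)))),
    snd (adascale_state P M g gradF S lr w0 xs t) + gain_ratio P S (grad_var M g) (grad_sqnorm gradF) (fst (adascale_state P M g gradF S lr w0 xs t)))"
  by (simp add: Let_def split_beta)

theorem theorem2:
  fixes P :: "'o measure" and M :: "'x measure"
    and f :: "'a::euclidean_space \<Rightarrow> 'x \<Rightarrow> real" and g :: "'a \<Rightarrow> 'x \<Rightarrow> 'a"
    and F :: "'a \<Rightarrow> real" and gradF :: "'a \<Rightarrow> 'a"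
    and xs :: "nat \<Rightarrow> nat \<Rightarrow> 'o \<Rightarrow> 'x"
    and \<alpha> \<beta> V Fstar \<eta> \<gamma> \<Delta> TSI :: real and S :: nat and w0 :: 'a
  assumes P: "prob_space P" and M: "prob_space M"
    and batches_indep: "prob_space.indep_vars P (\<lambda>_. M) (\<lambda>(t, i). xs t i) (UNIV \<times> {..<S})"
    and batches_distr: "\<And>t i. i < S \<Longrightarrow> distr P M (xs t i) = M"
    and g_meas: "(\<lambda>(w, x). g w x) \<in> borel_measurable (borel \<Otimes>\<^sub>M M)"
    and f_grad: "\<And>w x. ((\<lambda>v. f v x) has_derivative (\<lambda>h. g w x \<bullet> h)) (at w)"
    and F_grad: "\<And>w. (F has_derivative (\<lambda>h. gradF w \<bullet> h)) (at w)"
    and F_int: "\<And>w. integrable M (f w)"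
    and F_def: "\<And>w. F w = (\<integral>x. f w x \<partial>M)"
    and g_int: "\<And>w. integrable M (g w)"
    and g_sq_int: "\<And>w. integrable M (\<lambda>x. (norm (g w x))^2)"
    and unbiased: "\<And>w. (\<integral>x. g w x \<partial>M) = gradF w"
    and Fstar_min: "\<And>w. Fstar \<le> F w" and Fstar_att: "\<exists>w. F w = Fstar"
    and \<alpha>_pos: "\<alpha> > 0" and \<beta>_pos: "\<beta> > 0" and V_nonneg: "V \<ge> 0"
    and PL: "\<And>w. F w - Fstar \<le> 1 / (2 * \<alpha>) * (norm (gradF w))^2"
    and smooth: "\<And>w w'. norm (gradF w - gradF w') \<le> \<beta> * norm (w - w')"
    and bounded_var: "\<And>w. grad_var M g w \<le> V"
    and \<eta>_pos: "0 < \<eta>" and \<eta>_bound: "\<eta> < 2 / \<beta>"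
    and \<gamma>_def: "\<gamma> = \<eta> * \<alpha> * (2 - \<eta> * \<beta>)"
    and \<Delta>_def: "\<Delta> = 1 / (2 * \<gamma>) * \<eta>^2 * \<beta> * V"
    and S_pos: "S \<ge> 1" and S_bound: "real S \<le> 1 / \<gamma>"
    and TSI_pos: "TSI > 0"
  shows "let T = adascale_T P M g gradF S (\<lambda>_. \<eta>) w0 xs TSI;
             rbar = (\<Sum>t<T. adascale_r P M g gradF S (\<lambda>_. \<eta>) w0 xs t) / real T;
             wT = fst (adascale_state P M g gradF S (\<lambda>_. \<eta>) w0 xs T)
         in (\<integral>\<omega>. F (wT \<omega>) - Fstar \<partial>P)
              \<le> (1 - \<gamma>) powr (rbar * real T) * (F w0 - Fstar) + \<Delta>"
proof -
  interpret G: adaG F gradF \<beta> Fstar M g P xs S V \<alpha> \<eta>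
  proof -
    have Sb: "real S \<le> 1 / (\<eta> * \<alpha> * (2 - \<eta> * \<beta>))" using S_bound \<gamma>_def by simp
    show "adaG F gradF \<beta> Fstar M g P xs S V \<alpha> \<eta>"
      by (intro adaG.intro adaR.intro adaP.intro adaM.intro ada.intro adaG_axioms.intro adaR_axioms.intro
          adaP_axioms.intro adaM_axioms.intro) (fact F_grad smooth Fstar_min \<beta>_pos M g_meas g_int g_sq_int unbiased P batches_indep
        batches_distr S_pos V_nonneg bounded_var \<alpha>_pos PL \<eta>_pos \<eta>_bound Sb)+
  qed
  interpret P: prob_space P by (rule P)
  have gam: "G.gam = \<gamma>" unfolding G.gam_def \<gamma>_def ..
  have Del: "G.Del = \<Delta>" unfolding G.Del_def \<Delta>_def gam ..
  define rr where "rr t = adascale_r P M g gradF S (\<lambda>_. \<eta>) w0 xs t" for t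
  define c where "c t = rr t * \<eta>" for t
  have ct: "c t = rr t * \<eta>" for t unfolding c_def ..
  have state: "adascale_state P M g gradF S (\<lambda>_. \<eta>) w0 xs t = (G.Wp c w0 t, \<Sum>s<t. rr s)" for t
  proof (induction t)
    case 0
    show ?case by (simp add: G.Wp_def fun_eq_iff)
  next
    case (Suc t)
    have r: "gain_ratio P S (grad_var M g) (grad_sqnorm gradF) (G.Wp c w0 t) = rr t"
      unfolding rr_def adascale_r_def Suc by simp
    have "adascale_state P M g gradF S (\<lambda>_. \<eta>) w0 xs (Suc t)
        = ((\<lambda>\<omega>. G.Wp c w0 t \<omega> - (rr t * \<eta>) *\<^sub>R ((1 / real S) *\<^sub>R (\<Sum>i<S. g (G.Wp c w0 t \<omega>) (xs t i \<omega>)))),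
           (\<Sum>s<t. rr s) + rr t)"
      by (simp only: st_Suc Suc fst_conv snd_conv r)
    also have "(\<lambda>\<omega>. G.Wp c w0 t \<omega> - (rr t * \<eta>) *\<^sub>R ((1 / real S) *\<^sub>R (\<Sum>i<S. g (G.Wp c w0 t \<omega>) (xs t i \<omega>)))) = G.Wp c w0 (Suc t)"
    proof (rule ext)
      fix \<omega>
      show "G.Wp c w0 t \<omega> - (rr t * \<eta>) *\<^sub>R ((1 / real S) *\<^sub>R (\<Sum>i<S. g (G.Wp c w0 t \<omega>) (xs t i \<omega>))) = G.Wp c w0 (Suc t) \<omega>"
        unfolding G.Wp_Suc G.gbar_def ct ..
    qed
    finally show ?case by (simp only: sum.lessThan_Suc)
  qed
  have rr_eq: "rr t = gain_ratio P S (grad_var M g) (grad_sqnorm gradF) (G.Wp c w0 t)" for t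
  proof -
    have "rr t = gain_ratio P S (grad_var M g) (grad_sqnorm gradF) (fst (adascale_state P M g gradF S (\<lambda>_. \<eta>) w0 xs t))"
      unfolding rr_def adascale_r_def ..
    also have "fst (adascale_state P M g gradF S (\<lambda>_. \<eta>) w0 xs t) = G.Wp c w0 t"
      by (simp only: state fst_conv)
    finally show ?thesis .
  qed
  have hc: "c t = gain_ratio P S (grad_var M g) (grad_sqnorm gradF) (G.Wp c w0 t) * \<eta>" for t
    by (simp only: ct rr_eq)
  have rr1: "1 \<le> rr t" for t
    using G.rec_bound[OF hc, of "Suc t"] rr_eq by auto
  define T where "T = adascale_T P M g gradF S (\<lambda>_. \<eta>) w0 xs TSI"
  have T_eq: "T = (LEAST t. TSI \<le> (\<Sum>s<t. rr s))"
    unfolding T_def adascale_T_def by (simp only: state snd_conv)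
  have ex: "TSI \<le> (\<Sum>s<nat \<lceil>TSI\<rceil>. rr s)"
  proof -
    have "TSI \<le> real (nat \<lceil>TSI\<rceil>)" by linarith
    also have "\<dots> = (\<Sum>s<nat \<lceil>TSI\<rceil>. 1)" by simp
    also have "\<dots> \<le> (\<Sum>s<nat \<lceil>TSI\<rceil>. rr s)" by (intro sum_mono rr1)
    finally show ?thesis .
  qed
  have TL: "TSI \<le> (\<Sum>s<T. rr s)" unfolding T_eq by (rule LeastI[of "\<lambda>t. TSI \<le> (\<Sum>s<t. rr s)" "nat \<lceil>TSI\<rceil>", OF ex])
  have T0: "T \<noteq> 0" using TL TSI_pos by (cases T) auto
  have fb: "(\<integral>\<omega>. F (G.Wp c w0 T \<omega>) - Fstar \<partial>P) \<le> (1 - \<gamma>) powr (\<Sum>s<T. rr s) * (F w0 - Fstar) + \<Delta>"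
    using G.final_bound[OF hc T0] by (simp add: rr_eq gam Del)
  have "(\<Sum>t<T. adascale_r P M g gradF S (\<lambda>_. \<eta>) w0 xs t) / real T * real T = (\<Sum>s<T. rr s)"
    using T0 unfolding rr_def by simp
  then show ?thesis
    using fb unfolding Let_def T_def[symmetric] state by simp
qed

end
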